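(* Let $(R,\mathfrak m)$ be a one-dimensional Cohen–Macaulay local ring with infinite residue field admitting a canonical module $\omega_R$ with $R\subseteq\omega_R\subseteq\overline R$. Let $I$ be a fractional ideal of $R$ and let $z$ be a reduction of $\omega_R:I$. The following are equivalent: (1) $I$ is almost canonical; (2) $\omega_R:\mathfrak m=zI:\mathfrak m$; (3) $\mathfrak m\,\omega_R\subseteq zI$.
   Context: $Q(R)$ is the total ring of fractions and $\overline R$ the integral closure of $R$ in $Q(R)$; fractional ideals are finitely generated $R$-submodules of $Q(R)$ containing a non-zero-divisor, and $I:J=\{r\in Q(R)\mid rJ\subseteq I\}$. A reduction of $\omega_R:I$ is an element $z=x/y$ where $y\in R$ is regular with $y(\omega_R:I)\subseteq R$ and $(x)$ is a minimal reduction of the ideal $y(\omega_R:I)$. $I$ is almost canonical if $\omega_R:(\mathfrak m:\mathfrak m)\subseteq zI$ (this does not depend on the choices of $\omega_R$, $y$, $x$). *)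

theory Defs
  imports Main
begin

text \<open>Ambient type 'q plays the role of the total ring of fractions Q(R); R is a subset.\<close>

definition subring :: "'q::comm_ring_1 set \<Rightarrow> bool" where
  "subring R \<longleftrightarrow> 0 \<in> R \<and> 1 \<in> R \<and> (\<forall>a\<in>R. \<forall>b\<in>R. a + b \<in> R \<and> a - b \<in> R \<and> a * b \<in> R)"

definition rmodule :: "'q::comm_ring_1 set \<Rightarrow> 'q set \<Rightarrow> bool" where
  "rmodule R M \<longleftrightarrow> 0 \<in> M \<and> (\<forall>a\<in>M. \<forall>b\<in>M. a + b \<in> M) \<and> (\<forall>r\<in>R. \<forall>a\<in>M. r * a \<in> M)"

definition gen :: "'q::comm_ring_1 set \<Rightarrow> 'q set \<Rightarrow> 'q set" where
  "gen R G = {(\<Sum>g\<in>G. c g * g) | c. \<forall>g\<in>G. c g \<in> R}"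

definition fin_gen :: "'q::comm_ring_1 set \<Rightarrow> 'q set \<Rightarrow> bool" where
  "fin_gen R M \<longleftrightarrow> (\<exists>G. finite G \<and> G \<subseteq> M \<and> M = gen R G)"

definition r_ideal :: "'q::comm_ring_1 set \<Rightarrow> 'q set \<Rightarrow> bool" where
  "r_ideal R J \<longleftrightarrow> J \<subseteq> R \<and> rmodule R J"

definition prime_ideal :: "'q::comm_ring_1 set \<Rightarrow> 'q set \<Rightarrow> bool" where
  "prime_ideal R P \<longleftrightarrow> r_ideal R P \<and> P \<noteq> R \<and> (\<forall>a\<in>R. \<forall>b\<in>R. a * b \<in> P \<longrightarrow> a \<in> P \<or> b \<in> P)"

definition noetherian :: "'q::comm_ring_1 set \<Rightarrow> bool" where
  "noetherian R \<longleftrightarrow> (\<forall>J. r_ideal R J \<longrightarrow> fin_gen R J)"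

definition krull_dim_one :: "'q::comm_ring_1 set \<Rightarrow> bool" where
  "krull_dim_one R \<longleftrightarrow> (\<exists>P Q. prime_ideal R P \<and> prime_ideal R Q \<and> P \<subset> Q) \<and>
     \<not> (\<exists>P Q S. prime_ideal R P \<and> prime_ideal R Q \<and> prime_ideal R S \<and> P \<subset> Q \<and> Q \<subset> S)"

definition local_ring :: "'q::comm_ring_1 set \<Rightarrow> 'q set \<Rightarrow> bool" where
  "local_ring R m \<longleftrightarrow> m = {r \<in> R. \<not> (\<exists>u\<in>R. r * u = 1)} \<and> r_ideal R m"

definition regular_in :: "'q::comm_ring_1 set \<Rightarrow> 'q \<Rightarrow> bool" where
  "regular_in A s \<longleftrightarrow> s \<in> A \<and> (\<forall>r\<in>A. s * r = 0 \<longrightarrow> r = 0)"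

definition total_ring_of_fractions :: "'q::comm_ring_1 set \<Rightarrow> bool" where
  "total_ring_of_fractions R \<longleftrightarrow> subring R \<and>
     (\<forall>s. regular_in R s \<longrightarrow> (\<exists>t. s * t = 1)) \<and>
     (\<forall>q. \<exists>a\<in>R. \<exists>s. regular_in R s \<and> q * s = a)"

text \<open>One-dimensional CM: dimension one and depth >= 1, i.e. m contains an R-regular element\<close>
definition cm_dim_one :: "'q::comm_ring_1 set \<Rightarrow> 'q set \<Rightarrow> bool" where
  "cm_dim_one R m \<longleftrightarrow> krull_dim_one R \<and> (\<exists>x\<in>m. regular_in R x)"

definition infinite_residue_field :: "'q::comm_ring_1 set \<Rightarrow> 'q set \<Rightarrow> bool" where
  "infinite_residue_field R m \<longleftrightarrow> infinite ((\<lambda>r. {s \<in> R. r - s \<in> m}) ` R)"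

definition integral_closure :: "'q::comm_ring_1 set \<Rightarrow> 'q set" where
  "integral_closure R = {q. \<exists>n a. (\<forall>i<n. a i \<in> R) \<and> q ^ n + (\<Sum>i<n. a i * q ^ i) = 0}"

definition frac_ideal :: "'q::comm_ring_1 set \<Rightarrow> 'q set \<Rightarrow> bool" where
  "frac_ideal R I \<longleftrightarrow> rmodule R I \<and> fin_gen R I \<and> (\<exists>x\<in>I. regular_in UNIV x)"

definition colon :: "'q::comm_ring_1 set \<Rightarrow> 'q set \<Rightarrow> 'q set" where
  "colon I J = {r. \<forall>j\<in>J. r * j \<in> I}"

definition iprod :: "'q::comm_ring_1 set \<Rightarrow> 'q set \<Rightarrow> 'q set" where
  "iprod I J = {(\<Sum>i<(n::nat). a i * b i) | n a b. \<forall>i<n. a i \<in> I \<and> b i \<in> J}"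

definition smul :: "'q::comm_ring_1 \<Rightarrow> 'q set \<Rightarrow> 'q set" where
  "smul z I = (\<lambda>x. z * x) ` I"

fun ipow :: "'q::comm_ring_1 set \<Rightarrow> 'q set \<Rightarrow> nat \<Rightarrow> 'q set" where
  "ipow R J 0 = R"
| "ipow R J (Suc n) = iprod J (ipow R J n)"

definition is_reduction :: "'q::comm_ring_1 set \<Rightarrow> 'q set \<Rightarrow> 'q set \<Rightarrow> bool" where
  "is_reduction R K J \<longleftrightarrow> r_ideal R K \<and> r_ideal R J \<and> K \<subseteq> J \<and>
     (\<exists>n. ipow R J (Suc n) = iprod K (ipow R J n))"

definition is_minimal_reduction :: "'q::comm_ring_1 set \<Rightarrow> 'q set \<Rightarrow> 'q set \<Rightarrow> bool" where
  "is_minimal_reduction R K J \<longleftrightarrow> is_reduction R K J \<and>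
     (\<forall>K'. K' \<subseteq> K \<longrightarrow> is_reduction R K' J \<longrightarrow> K' = K)"

text \<open>Canonical fractional ideal (one-dimensional CM case): duality K:(K:I) = I for all fractional I\<close>
definition canonical_ideal :: "'q::comm_ring_1 set \<Rightarrow> 'q set \<Rightarrow> bool" where
  "canonical_ideal R W \<longleftrightarrow> frac_ideal R W \<and>
     (\<forall>I. frac_ideal R I \<longrightarrow> colon W (colon W I) = I)"

text \<open>z = x/y is a reduction of W:I\<close>
definition reduction_of_colon :: "'q::comm_ring_1 set \<Rightarrow> 'q set \<Rightarrow> 'q set \<Rightarrow> 'q \<Rightarrow> bool" where
  "reduction_of_colon R W I z \<longleftrightarrow> (\<exists>x y. regular_in R y \<and> smul y (colon W I) \<subseteq> R \<and>
     is_minimal_reduction R (smul x R) (smul y (colon W I)) \<and> z * y = x)"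

definition almost_canonical :: "'q::comm_ring_1 set \<Rightarrow> 'q set \<Rightarrow> 'q set \<Rightarrow> 'q set \<Rightarrow> 'q \<Rightarrow> bool" where
  "almost_canonical R m W I z \<longleftrightarrow> colon W (colon m m) \<subseteq> smul z I"

end

theory Submission
  imports Defs
begin

lemma rmod_sum:
  assumes "rmodule R M" "finite G" "\<And>g. g \<in> G \<Longrightarrow> f g \<in> M"
  shows "sum f G \<in> M"
  using assms(2,3)
proof (induction G rule: finite_induct)
  case empty thus ?case using assms(1) by (simp add: rmodule_def)
next
  case (insert g G) thus ?case using assms(1) by (simp add: rmodule_def)
qed

lemma subring_rmod: "subring R \<Longrightarrow> rmodule R R"
  by (simp add: subring_def rmodule_def)

lemma pow_in: "subring R \<Longrightarrow> b \<in> R \<Longrightarrow> b ^ j \<in> R"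
  by (induction j) (auto simp: subring_def)

lemma reg_inv: "total_ring_of_fractions R \<Longrightarrow> regular_in R s \<Longrightarrow> \<exists>t. s*t = 1"
  by (simp add: total_ring_of_fractions_def)

lemma qreg_inv:
  fixes R :: "'q::comm_ring_1 set" and q :: 'q
  assumes "total_ring_of_fractions R" "regular_in UNIV q"
  shows "\<exists>t. q*t = 1"
proof -
  from assms(1) obtain a s where a: "a \<in> R" "regular_in R s" "q*s = a"
    unfolding total_ring_of_fractions_def by blast
  have "regular_in R a"
    unfolding regular_in_def
  proof (intro conjI ballI impI)
    show "a \<in> R" by fact
    fix r assume r: "r \<in> R" "a*r = 0"
    then have "q*(s*r) = 0" using a by (metis mult.assoc)
    then have "s*r = 0" using assms(2) by (simp add: regular_in_def)
    then show "r = 0" using a(2) r(1) by (simp add: regular_in_def)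
  qed
  then obtain t where "a*t = 1" using reg_inv assms(1) by blast
  then have "q*(s*t) = 1" using a by (metis mult.assoc)
  thus ?thesis by blast
qed

lemma inv_reg:
  fixes q :: "'q::comm_ring_1"
  assumes "q*t = 1" shows "regular_in UNIV q"
  unfolding regular_in_def
proof (intro conjI ballI impI)
  fix r assume "q*r = 0"
  then have "t*(q*r) = 0" by simp
  then show "r = 0" using assms by (simp add: mult.assoc[symmetric] mult.commute)
qed simp

lemma iprod_iff:
  fixes A B :: "'q::comm_ring_1 set"
  shows "v \<in> iprod A B \<longleftrightarrow> (\<exists>(n::nat) a b. v = (\<Sum>i<n. a i * b i) \<and> (\<forall>i<n. a i \<in> A \<and> b i \<in> B))"
  unfolding iprod_def by blast

lemma iprod_mem: fixes A B :: "'q::comm_ring_1 set" shows "a \<in> A \<Longrightarrow> b \<in> B \<Longrightarrow> a*b \<in> iprod A B"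
  unfolding iprod_iff
  by (rule exI[of _ 1], rule exI[of _ "\<lambda>_. a"], rule exI[of _ "\<lambda>_. b"]) simp

lemma sum_split_add:
  fixes n1 n2 :: nat
  shows "(\<Sum>i<n1+n2. f i) = (\<Sum>i<n1. f i) + (\<Sum>i<n2. (f (n1+i)::'a::comm_monoid_add))"
  by (induction n2) (simp_all add: add.assoc)

lemma iprod_rmod:
  fixes A B :: "'q::comm_ring_1 set"
  assumes "\<forall>r\<in>R. \<forall>a\<in>A. r*a \<in> A"
  shows "rmodule R (iprod A B)"
  unfolding rmodule_def
proof (intro conjI ballI)
  show "0 \<in> iprod A B" unfolding iprod_iff
    by (rule exI[of _ 0]) simp
next
  fix v1 v2 assume "v1 \<in> iprod A B" "v2 \<in> iprod A B"
  then obtain n1 a1 b1 n2 a2 b2 where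
    1: "v1 = (\<Sum>i<(n1::nat). a1 i * b1 i)" "\<forall>i<n1. a1 i \<in> A \<and> b1 i \<in> B" and
    2: "v2 = (\<Sum>i<(n2::nat). a2 i * b2 i)" "\<forall>i<n2. a2 i \<in> A \<and> b2 i \<in> B"
    unfolding iprod_iff by blast
  define a where "a i = (if i < n1 then a1 i else a2 (i - n1))" for i
  define b where "b i = (if i < n1 then b1 i else b2 (i - n1))" for i
  have "(\<Sum>i<n1+n2. a i * b i) = (\<Sum>i<n1. a i * b i) + (\<Sum>i<n2. a (n1+i) * b (n1+i))"
    by (rule sum_split_add)
  also have "(\<Sum>i<n1. a i * b i) = v1" unfolding 1 a_def b_def by (rule sum.cong) auto
  also have "(\<Sum>i<n2. a (n1+i) * b (n1+i)) = v2" unfolding 2 a_def b_def by (rule sum.cong) auto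
  finally have "v1 + v2 = (\<Sum>i<n1+n2. a i * b i)" by simp
  moreover have "\<forall>i<n1+n2. a i \<in> A \<and> b i \<in> B" using 1 2 unfolding a_def b_def by auto
  ultimately show "v1 + v2 \<in> iprod A B" unfolding iprod_iff by blast
next
  fix r v assume r: "r \<in> R" and "v \<in> iprod A B"
  then obtain n a b where 1: "v = (\<Sum>i<(n::nat). a i * b i)" "\<forall>i<n. a i \<in> A \<and> b i \<in> B"
    unfolding iprod_iff by blast
  have "r * v = (\<Sum>i<n. (r * a i) * b i)" unfolding 1 by (simp add: sum_distrib_left mult.assoc)
  moreover have "\<forall>i<n. r * a i \<in> A \<and> b i \<in> B" using 1 r assms by auto
  ultimately show "r * v \<in> iprod A B" unfolding iprod_iff by (intro exI[of _ n] exI[of _ "\<lambda>i. r * a i"] exI[of _ b]) simp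
qed

lemma ipow_rmod:
  fixes A R :: "'q::comm_ring_1 set"
  assumes "subring R" "r_ideal R A"
  shows "rmodule R (ipow R A n)"
proof (cases n)
  case 0 thus ?thesis using assms subring_rmod by simp
next
  case (Suc k)
  have "\<forall>r\<in>R. \<forall>a\<in>A. r*a \<in> A" using assms(2) by (simp add: r_ideal_def rmodule_def)
  thus ?thesis using Suc iprod_rmod by simp
qed

lemma ipow_sub:
  fixes A R :: "'q::comm_ring_1 set"
  assumes "subring R" "A \<subseteq> R"
  shows "ipow R A n \<subseteq> R"
proof (induction n)
  case 0 thus ?case by simp
next
  case (Suc n)
  show ?case
  proof
    fix v assume "v \<in> ipow R A (Suc n)"
    then obtain k a b where 1: "v = (\<Sum>i<(k::nat). a i * b i)" "\<forall>i<k. a i \<in> A \<and> b i \<in> ipow R A n"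
      by (auto simp: iprod_iff)
    show "v \<in> R" unfolding 1(1)
      by (rule rmod_sum[OF subring_rmod[OF assms(1)]]) (use 1(2) Suc assms in \<open>auto simp: subring_def subset_iff\<close>)
  qed
qed

lemma ipow_pow: fixes A :: "'q::comm_ring_1 set" shows "a \<in> A \<Longrightarrow> 1 \<in> R \<Longrightarrow> a ^ n \<in> ipow R A n"
  by (induction n) (auto intro: iprod_mem)

lemma iprod_smul:
  fixes B R :: "'q::comm_ring_1 set"
  assumes "rmodule R B" "v \<in> iprod (smul x R) B"
  shows "\<exists>b\<in>B. v = x * b"
proof -
  obtain n a b where 1: "v = (\<Sum>i<(n::nat). a i * b i)" "\<forall>i<n. a i \<in> smul x R \<and> b i \<in> B"
    using assms(2) by (auto simp: iprod_iff)
  have "\<forall>i<n. \<exists>r. r \<in> R \<and> a i = x * r" using 1(2) by (auto simp: smul_def)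
  then obtain r where r: "\<forall>i<n. r i \<in> R \<and> a i = x * r i" by metis
  have "v = x * (\<Sum>i<n. r i * b i)" unfolding 1(1) using r
    by (simp add: sum_distrib_left mult.assoc)
  moreover have "(\<Sum>i<n. r i * b i) \<in> B"
    by (rule rmod_sum[OF assms(1)]) (use r 1 assms(1) in \<open>auto simp: rmodule_def\<close>)
  ultimately show ?thesis by blast
qed


lemma bounded_fin:
  fixes R :: "'q::comm_ring_1 set"
  assumes "total_ring_of_fractions R" "finite G"
  shows "\<exists>s. regular_in R s \<and> (\<forall>g\<in>G. g*s \<in> R)"
  using assms(2)
proof (induction G rule: finite_induct)
  case empty
  have "regular_in R 1" using assms(1) by (simp add: regular_in_def total_ring_of_fractions_def subring_def)
  thus ?case by blast
next
  case (insert g G)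
  then obtain s where s: "regular_in R s" "\<forall>g\<in>G. g*s \<in> R" by blast
  from assms(1) obtain a t where t: "a \<in> R" "regular_in R t" "g*t = a"
    unfolding total_ring_of_fractions_def by blast
  have sR: "subring R" using assms(1) by (simp add: total_ring_of_fractions_def)
  have "regular_in R (s*t)"
    unfolding regular_in_def
  proof (intro conjI ballI impI)
    show "s*t \<in> R" using s t sR by (simp add: regular_in_def subring_def)
    fix r assume r: "r \<in> R" "s*t*r = 0"
    then have "s*(t*r) = 0" by (simp add: mult.assoc)
    moreover have "t*r \<in> R" using t r sR by (simp add: regular_in_def subring_def)
    ultimately have "t*r = 0" using s by (simp add: regular_in_def)
    then show "r = 0" using t r by (simp add: regular_in_def)
  qed
  moreover have "\<forall>h\<in>insert g G. h*(s*t) \<in> R"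
  proof
    fix h assume "h \<in> insert g G"
    then show "h*(s*t) \<in> R"
    proof
      assume "h = g"
      then have "h*(s*t) = a * s" using t by (metis mult.assoc mult.commute)
      thus ?thesis using t s sR by (simp add: regular_in_def subring_def)
    next
      assume "h \<in> G"
      then have "h*s \<in> R" using s by blast
      moreover have "h*(s*t) = (h*s)*t" by (simp add: mult.assoc)
      moreover have "t \<in> R" using t by (simp add: regular_in_def)
      ultimately show ?thesis using sR unfolding subring_def by metis
    qed
  qed
  ultimately show ?case by blast
qed

lemma bounded_gen:
  fixes R :: "'q::comm_ring_1 set"
  assumes "total_ring_of_fractions R" "fin_gen R I"
  shows "\<exists>s. regular_in R s \<and> (\<forall>i\<in>I. s*i \<in> R)"
proof -
  obtain G where G: "finite G" "G \<subseteq> I" "I = gen R G" using assms(2) by (auto simp: fin_gen_def)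
  obtain s where s: "regular_in R s" "\<forall>g\<in>G. g*s \<in> R" using bounded_fin[OF assms(1) G(1)] by blast
  have sR: "subring R" using assms(1) by (simp add: total_ring_of_fractions_def)
  have "\<forall>i\<in>I. s*i \<in> R"
  proof
    fix i assume "i \<in> I"
    then obtain c where c: "i = (\<Sum>g\<in>G. c g * g)" "\<forall>g\<in>G. c g \<in> R" using G(3) by (auto simp: gen_def)
    have "s*i = (\<Sum>g\<in>G. c g * (g * s))" unfolding c by (simp add: sum_distrib_left algebra_simps)
    also have "\<dots> \<in> R"
      by (rule rmod_sum[OF subring_rmod[OF sR] G(1)]) (use c s sR in \<open>auto simp: subring_def\<close>)
    finally show "s*i \<in> R" .
  qed
  thus ?thesis using s by blast
qed

lemma frac_R:
  fixes R :: "'q::comm_ring_1 set"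
  assumes "subring R" shows "frac_ideal R R"
  unfolding frac_ideal_def
proof (intro conjI)
  show "rmodule R R" using assms by (rule subring_rmod)
  have "R = gen R {1}" unfolding gen_def
  proof (intro set_eqI iffI)
    fix r assume "r \<in> R"
    thus "r \<in> {\<Sum>g\<in>{1}. c g * g |c. \<forall>g\<in>{1}. c g \<in> R}"
      by (intro CollectI exI[of _ "\<lambda>_. r"]) simp
  qed auto
  thus "fin_gen R R" unfolding fin_gen_def using assms by (intro exI[of _ "{1}"]) (auto simp: subring_def)
  show "\<exists>x\<in>R. regular_in UNIV x" using assms inv_reg[of 1 1] by (auto simp: subring_def)
qed

lemma frac_smul:
  fixes R I :: "'q::comm_ring_1 set"
  assumes "frac_ideal R I" "z*zi = 1"
  shows "frac_ideal R (smul z I)"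
  unfolding frac_ideal_def
proof (intro conjI)
  have I: "rmodule R I" "fin_gen R I" "\<exists>x\<in>I. regular_in UNIV x" using assms(1) by (auto simp: frac_ideal_def)
  show "rmodule R (smul z I)" using I(1) unfolding rmodule_def smul_def
  proof (intro conjI ballI)
    have "(0::'q) \<in> I" using I(1) by (simp add: rmodule_def)
    thus "0 \<in> (*) z ` I" by (intro image_eqI[of _ _ 0]) simp_all
  next
    fix a b assume "a \<in> (*) z ` I" "b \<in> (*) z ` I"
    then obtain a' b' where "a' \<in> I" "b' \<in> I" "a = z*a'" "b = z*b'" by auto
    moreover have "a' + b' \<in> I" using I(1) \<open>a' \<in> I\<close> \<open>b' \<in> I\<close> by (simp add: rmodule_def)
    moreover have "a + b = z * (a' + b')" using \<open>a = z*a'\<close> \<open>b = z*b'\<close> by (simp add: distrib_left)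
    ultimately show "a + b \<in> (*) z ` I" by (intro image_eqI[of _ _ "a'+b'"]) simp_all
  next
    fix r a assume "r \<in> R" "a \<in> (*) z ` I"
    then obtain a' where "a' \<in> I" "a = z*a'" by auto
    moreover have "r * (z * a') = z * (r * a')" by (simp add: algebra_simps)
    moreover have "r * a' \<in> I" using I(1) \<open>r \<in> R\<close> \<open>a' \<in> I\<close> by (auto simp: rmodule_def)
    ultimately show "r * a \<in> (*) z ` I" by (intro image_eqI[of _ _ "r*a'"]) simp_all
  qed
  obtain G where G: "finite G" "G \<subseteq> I" "I = gen R G" using I(2) by (auto simp: fin_gen_def)
  have inj: "inj_on ((*) z) G"
  proof
    fix a b assume "z*a = z*b"
    then have "zi*z*a = zi*z*b" by (simp add: mult.assoc)
    thus "a = b" using assms(2) by (metis mult.commute mult_1)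
  qed
  have "smul z I = gen R (smul z G)"
  proof (intro set_eqI iffI)
    fix v assume "v \<in> smul z I"
    then obtain i where i: "i \<in> I" "v = z*i" by (auto simp: smul_def)
    then obtain c where c: "i = (\<Sum>g\<in>G. c g * g)" "\<forall>g\<in>G. c g \<in> R" using G(3) by (auto simp: gen_def)
    define c' where "c' q = c (zi * q)" for q
    have zz: "zi * (z * g) = g" for g using assms(2) by (metis mult.assoc mult.commute mult_1)
    have "(\<Sum>q\<in>smul z G. c' q * q) = (\<Sum>g\<in>G. c' (z*g) * (z*g))"
      unfolding smul_def by (rule sum.reindex[OF inj, unfolded comp_def])
    also have "\<dots> = (\<Sum>g\<in>G. z * (c g * g))" unfolding c'_def zz by (rule sum.cong) (simp_all add: mult.left_commute)
    also have "\<dots> = z * (\<Sum>g\<in>G. c g * g)" by (simp add: sum_distrib_left)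
    finally have "v = (\<Sum>q\<in>smul z G. c' q * q)" using i c by simp
    moreover have "\<forall>q\<in>smul z G. c' q \<in> R" unfolding c'_def smul_def using c(2) by (simp add: zz)
    ultimately show "v \<in> gen R (smul z G)" unfolding gen_def by blast
  next
    fix v assume "v \<in> gen R (smul z G)"
    then obtain c' where c': "v = (\<Sum>q\<in>smul z G. c' q * q)" "\<forall>q\<in>smul z G. c' q \<in> R" by (auto simp: gen_def)
    have "v = (\<Sum>g\<in>G. c' (z*g) * (z*g))"
      unfolding c'(1) smul_def by (rule sum.reindex[OF inj, unfolded comp_def])
    also have "\<dots> = (\<Sum>g\<in>G. z * (c' (z*g) * g))" by (rule sum.cong) (simp_all add: mult.left_commute)
    also have "\<dots> = z * (\<Sum>g\<in>G. c' (z*g) * g)" by (simp add: sum_distrib_left)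
    finally have "v = z * (\<Sum>g\<in>G. c' (z*g) * g)" .
    moreover have "(\<Sum>g\<in>G. c' (z*g) * g) \<in> I" unfolding G(3) gen_def
      using c'(2) by (auto simp: smul_def)
    ultimately show "v \<in> smul z I" by (auto simp: smul_def)
  qed
  moreover have "finite (smul z G)" "smul z G \<subseteq> smul z I" using G by (auto simp: smul_def)
  ultimately show "fin_gen R (smul z I)" unfolding fin_gen_def by blast
  obtain i0 where i0: "i0 \<in> I" "regular_in UNIV i0" using I(3) by blast
  have "regular_in UNIV (z*i0)" unfolding regular_in_def
  proof (intro conjI ballI impI)
    fix r assume "z*i0*r = 0"
    then have "i0*(z*r) = 0" by (simp add: algebra_simps)
    then have "z*r = 0" using i0 by (simp add: regular_in_def)
    then have "zi*z*r = 0" by (simp add: mult.assoc)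
    thus "r = 0" using assms(2) by (metis mult.commute mult_1)
  qed simp
  thus "\<exists>x\<in>smul z I. regular_in UNIV x" using i0 by (auto simp: smul_def)
qed


lemma acc:
  fixes R :: "'q::comm_ring_1 set"
  assumes noeth: "noetherian R" and sR: "subring R" and e: "e*ei = 1" and hb: "h*b = 1" and bR: "b \<in> R"
    and eh: "\<forall>k. e*h^k \<in> R"
  shows "h \<in> R"
proof -
  define U where "U = {r. \<exists>k s. s \<in> R \<and> r = e*h^k*s}"
  have shift: "\<exists>s'\<in>R. e*h^k*s = e*h^N*s'" if "s\<in>R" "k \<le> N" for k N s
  proof -
    have "h^N * b^(N-k) = h^k * (h*b)^(N-k)"
    proof -
      have "h^N = h^k * h^(N-k)" using that(2) by (metis le_add_diff_inverse power_add)
      thus ?thesis by (simp add: power_mult_distrib mult.assoc)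
    qed
    then have "h^N * b^(N-k) = h^k" using hb by simp
    then have "e*h^k*s = e*h^N*(b^(N-k)*s)" by (metis mult.assoc)
    moreover have "b^(N-k)*s \<in> R" using pow_in[OF sR bR] that(1) sR by (simp add: subring_def)
    ultimately show ?thesis by blast
  qed
  have "r_ideal R U"
    unfolding r_ideal_def rmodule_def
  proof (intro conjI ballI)
    show "U \<subseteq> R"
    proof
      fix r assume "r \<in> U"
      then obtain k s where "s \<in> R" "r = e*h^k*s" unfolding U_def by blast
      thus "r \<in> R" using eh sR by (simp add: subring_def)
    qed
    show "0 \<in> U" unfolding U_def using sR by (intro CollectI exI[of _ 0]) (simp add: subring_def)
  next
    fix r1 r2 assume "r1 \<in> U" "r2 \<in> U"
    then obtain k1 s1 k2 s2 where 1: "s1 \<in> R" "r1 = e*h^k1*s1" "s2 \<in> R" "r2 = e*h^k2*s2"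
      unfolding U_def by blast
    obtain s1' where s1': "s1' \<in> R" "e*h^k1*s1 = e*h^(k1+k2)*s1'" using shift[OF 1(1), of k1 "k1+k2"] by auto
    obtain s2' where s2': "s2' \<in> R" "e*h^k2*s2 = e*h^(k1+k2)*s2'" using shift[OF 1(3), of k2 "k1+k2"] by auto
    have "r1 + r2 = e*h^(k1+k2)*(s1'+s2')" using 1 s1' s2' by (simp add: distrib_left)
    moreover have "s1'+s2' \<in> R" using s1' s2' sR by (simp add: subring_def)
    ultimately show "r1 + r2 \<in> U" unfolding U_def by blast
  next
    fix r u assume "r \<in> R" "u \<in> U"
    then obtain k s where 1: "s \<in> R" "u = e*h^k*s" unfolding U_def by blast
    have "r*u = e*h^k*(r*s)" using 1 by (simp add: algebra_simps)
    moreover have "r*s \<in> R" using 1 \<open>r\<in>R\<close> sR by (simp add: subring_def)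
    ultimately show "r*u \<in> U" unfolding U_def by blast
  qed
  then obtain G where G: "finite G" "G \<subseteq> U" "U = gen R G" using noeth by (auto simp: noetherian_def fin_gen_def)
  have "\<forall>g\<in>G. \<exists>k. \<exists>s. s \<in> R \<and> g = e*h^k*s" using G(2) unfolding U_def by blast
  then obtain kf where kf: "\<forall>g\<in>G. \<exists>s. s \<in> R \<and> g = e*h^(kf g)*s" by metis
  define N where "N = (\<Sum>g\<in>G. kf g)"
  have "\<forall>g\<in>G. \<exists>s. s \<in> R \<and> g = e*h^N*s"
  proof
    fix g assume g: "g \<in> G"
    then obtain s where s: "s \<in> R" "g = e*h^(kf g)*s" using kf by blast
    have "kf g \<le> N" unfolding N_def using G(1) g by (simp add: member_le_sum)
    thus "\<exists>s. s \<in> R \<and> g = e*h^N*s" using shift[OF s(1), of "kf g" N] s(2) by auto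
  qed
  then obtain sg where sg: "\<forall>g\<in>G. sg g \<in> R \<and> g = e*h^N*sg g" by metis
  have "e*h^(Suc N) \<in> U" unfolding U_def using sR by (intro CollectI exI[of _ "Suc N"] exI[of _ 1]) (simp add: subring_def)
  then obtain c where c: "e*h^(Suc N) = (\<Sum>g\<in>G. c g * g)" "\<forall>g\<in>G. c g \<in> R"
    using G(3) by (auto simp: gen_def)
  have "(\<Sum>g\<in>G. c g * g) = (\<Sum>g\<in>G. e*h^N*(c g * sg g))"
  proof (rule sum.cong)
    fix g assume "g \<in> G"
    then have "g = e*h^N*sg g" using sg by blast
    then show "c g * g = e*h^N*(c g * sg g)" by (metis mult.left_commute)
  qed simp
  also have "\<dots> = e*h^N*(\<Sum>g\<in>G. c g * sg g)" by (simp add: sum_distrib_left)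
  finally have eq0: "e*h^(Suc N) = e*h^N*(\<Sum>g\<in>G. c g * sg g)" using c(1) by simp
  have eq: "e*h^N*h = e*h^N*(\<Sum>g\<in>G. c g * sg g)" using eq0 by (simp add: mult.commute mult.left_commute)
  have tR: "(\<Sum>g\<in>G. c g * sg g) \<in> R"
    by (rule rmod_sum[OF subring_rmod[OF sR] G(1)]) (use c sg sR in \<open>auto simp: subring_def\<close>)
  have inv: "(ei*b^N) * (e*h^N) = 1"
  proof -
    have "(ei*b^N) * (e*h^N) = (e*ei) * (h*b)^N" by (simp add: power_mult_distrib algebra_simps)
    thus ?thesis using e hb by simp
  qed
  have "h = (ei*b^N) * (e*h^N) * h" using inv by simp
  also have "\<dots> = (ei*b^N) * (e*h^N) * (\<Sum>g\<in>G. c g * sg g)" using eq by (metis mult.assoc)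
  also have "\<dots> = (\<Sum>g\<in>G. c g * sg g)" using inv by simp
  finally show ?thesis using tR by simp
qed

lemma key_pow:
  fixes R A :: "'q::comm_ring_1 set"
  assumes sR: "subring R" and A: "r_ideal R A" and x: "x*xi = 1" and xA: "x \<in> A"
    and red: "ipow R A (Suc n) = iprod (smul x R) (ipow R A n)"
    and hx: "h*x \<in> A"
  shows "h^k * x^n \<in> ipow R A n"
proof (induction k)
  case 0
  show ?case using ipow_pow[OF xA, of R n] sR by (simp add: subring_def)
next
  case (Suc k)
  have "(h*x) * (h^k * x^n) \<in> ipow R A (Suc n)" using iprod_mem[OF hx Suc] by simp
  then obtain w where w: "w \<in> ipow R A n" "(h*x) * (h^k * x^n) = x * w"
    using iprod_smul[OF ipow_rmod[OF sR A]] red by metis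
  have "xi * ((h*x) * (h^k * x^n)) = (x*xi) * (h^Suc k * x^n)" by (simp add: algebra_simps)
  then have "h^Suc k * x^n = xi * ((h*x) * (h^k * x^n))" using x by simp
  also have "\<dots> = w" using w(2) x by (metis mult.assoc mult.commute mult_1)
  finally show ?case using w(1) by simp
qed


theorem proposition1p6:
  fixes R m W I :: "'q::comm_ring_1 set" and z :: 'q
  assumes "total_ring_of_fractions R"
    and "noetherian R"
    and "local_ring R m"
    and "cm_dim_one R m"
    and "infinite_residue_field R m"
    and "canonical_ideal R W"
    and "R \<subseteq> W" and "W \<subseteq> integral_closure R"
    and "frac_ideal R I"
    and "reduction_of_colon R W I z"
  shows "(almost_canonical R m W I z \<longleftrightarrow> colon W m = colon (smul z I) m)
       \<and> (colon W m = colon (smul z I) m \<longleftrightarrow> iprod m W \<subseteq> smul z I)"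
proof -
  have tot: "total_ring_of_fractions R" by fact
  have sR: "subring R" using tot by (simp add: total_ring_of_fractions_def)
  have noeth: "noetherian R" by fact
  have mdef: "m = {r \<in> R. \<not> (\<exists>u\<in>R. r * u = 1)}" and mid: "r_ideal R m"
    using assms(3) by (auto simp: local_ring_def)
  have mR: "m \<subseteq> R" using mid by (simp add: r_ideal_def)
  have mmul: "\<And>r a. r \<in> R \<Longrightarrow> a \<in> m \<Longrightarrow> r*a \<in> m" using mid by (simp add: r_ideal_def rmodule_def)
  have Wfr: "frac_ideal R W" and dual: "\<And>X. frac_ideal R X \<Longrightarrow> colon W (colon W X) = X"
    using assms(6) by (auto simp: canonical_ideal_def)
  have Wmod: "rmodule R W" using Wfr by (simp add: frac_ideal_def)
  have Wmul: "\<And>r a. r \<in> R \<Longrightarrow> a \<in> W \<Longrightarrow> r*a \<in> W" using Wmod by (simp add: rmodule_def)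
  have Imod: "rmodule R I" using assms(9) by (simp add: frac_ideal_def)
  define J where "J = colon W I"
  from assms(10) obtain x y where xy: "regular_in R y" "smul y J \<subseteq> R"
    "is_minimal_reduction R (smul x R) (smul y J)" "z*y = x"
    unfolding reduction_of_colon_def J_def by blast
  define A where "A = smul y J"
  have xRid: "r_ideal R (smul x R)" and Aid: "r_ideal R A" and xRA: "smul x R \<subseteq> A"
    using xy(3) unfolding A_def is_minimal_reduction_def is_reduction_def by auto
  obtain n where red: "ipow R A (Suc n) = iprod (smul x R) (ipow R A n)"
    using xy(3) unfolding A_def is_minimal_reduction_def is_reduction_def by auto
  obtain yi where yi: "y*yi = 1" using reg_inv[OF tot xy(1)] by blast
  have xA: "x \<in> A" using xRA sR by (force simp: smul_def subring_def)
  then obtain j0 where j0: "j0 \<in> J" "x = y*j0" unfolding A_def smul_def by auto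
  have "z = j0"
  proof -
    have "z = yi * (z*y)" using yi by (metis mult.assoc mult.commute mult_1)
    also have "\<dots> = yi * (y * j0)" using xy(4) j0 by simp
    also have "\<dots> = j0" using yi by (metis mult.assoc mult.commute mult_1)
    finally show ?thesis .
  qed
  then have zJ: "z \<in> J" using j0 by simp
  \<comment> \<open>J contains a unit\<close>
  obtain k0 where k0: "k0 \<in> W" "regular_in UNIV k0" using Wfr by (auto simp: frac_ideal_def)
  obtain ki where ki: "k0*ki = 1" using qreg_inv[OF tot k0(2)] by blast
  obtain s where s: "regular_in R s" "\<forall>i\<in>I. s*i \<in> R"
    using bounded_gen[OF tot] assms(9) by (auto simp: frac_ideal_def)
  obtain si where si: "s*si = 1" using reg_inv[OF tot s(1)] by blast
  have uJ: "k0*s \<in> J" unfolding J_def colon_def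
  proof (intro CollectI ballI)
    fix i assume "i \<in> I"
    then have "(s*i) * k0 \<in> W" using Wmul k0 s by blast
    thus "k0*s*i \<in> W" by (simp add: algebra_simps)
  qed
  have yuA: "y*(k0*s) \<in> A" using uJ unfolding A_def smul_def by auto
  have yuinv: "(y*(k0*s)) * (yi*(ki*si)) = 1"
  proof -
    have "(y*(k0*s)) * (yi*(ki*si)) = (y*yi)*(k0*ki)*(s*si)" by (simp add: algebra_simps)
    thus ?thesis using yi ki si by simp
  qed
  have "(y*(k0*s))^(Suc n) \<in> ipow R A (Suc n)" using ipow_pow[OF yuA, of R "Suc n"] sR by (simp only: subring_def)
  then obtain w where "(y*(k0*s))^(Suc n) = x * w"
    using iprod_smul[OF ipow_rmod[OF sR Aid]] red by metis
  then have "x * (w * (yi*(ki*si))^(Suc n)) = 1"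
    using yuinv by (metis mult.assoc power_mult_distrib power_one)
  then obtain xi where xi: "x*xi = 1" by blast
  have zinv: "z * (xi*y) = 1"
  proof -
    have "z * (xi*y) = (z*y)*xi" by (simp add: algebra_simps)
    thus ?thesis using xy(4) xi by simp
  qed
  define L where "L = smul z I"
  have Lfr: "frac_ideal R L" unfolding L_def by (rule frac_smul[OF assms(9) zinv])
  have Lmod: "rmodule R L" using Lfr by (simp add: frac_ideal_def)
  have LW: "L \<subseteq> W" using zJ unfolding L_def J_def smul_def colon_def by auto
  have mfr: "frac_ideal R m"
  proof -
    have "fin_gen R m" using noeth mid by (simp add: noetherian_def)
    moreover obtain x0 where "x0 \<in> m" "regular_in R x0" using assms(4) by (auto simp: cm_dim_one_def)
    moreover then obtain t where "x0*t = 1" using reg_inv[OF tot] by blast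
    ultimately show ?thesis using mid inv_reg unfolding frac_ideal_def r_ideal_def by blast
  qed
  have WW: "colon W W = R"
  proof -
    have "colon W R = W"
    proof (intro set_eqI iffI)
      fix v assume "v \<in> colon W R"
      moreover have "(1::'q) \<in> R" using sR by (simp add: subring_def)
      ultimately have "v*1 \<in> W" unfolding colon_def by blast
      thus "v \<in> W" by simp
    next
      fix v assume "v \<in> W"
      thus "v \<in> colon W R" using Wmul by (simp add: colon_def mult.commute)
    qed
    thus ?thesis using dual[OF frac_R[OF sR]] by simp
  qed
  define C where "C \<longleftrightarrow> (\<forall>a\<in>m. \<forall>f\<in>colon W m. a*f \<in> L)"
  have E2: "colon W m = colon L m \<longleftrightarrow> C"
  proof
    assume eq: "colon W m = colon L m"
    show C unfolding C_def
    proof (intro ballI)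
      fix a f assume "a \<in> m" "f \<in> colon W m"
      then have "f*a \<in> L" using eq by (auto simp: colon_def)
      thus "a*f \<in> L" by (simp add: mult.commute)
    qed
  next
    assume C
    show "colon W m = colon L m"
    proof
      show "colon L m \<subseteq> colon W m" using LW by (auto simp: colon_def)
      show "colon W m \<subseteq> colon L m"
      proof
        fix f assume f: "f \<in> colon W m"
        have "\<forall>j\<in>m. f * j \<in> L"
        proof
          fix j assume "j \<in> m"
          then have "j * f \<in> L" using \<open>C\<close> f unfolding C_def by blast
          thus "f * j \<in> L" by (simp add: mult.commute)
        qed
        thus "f \<in> colon L m" by (simp add: colon_def)
      qed
    qed
  qed
  have E1: "almost_canonical R m W I z \<longleftrightarrow> C"
  proof
    assume ac: "almost_canonical R m W I z"
    show C unfolding C_def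
    proof (intro ballI)
      fix a f assume a: "a \<in> m" and f: "f \<in> colon W m"
      have "a*f \<in> colon W (colon m m)" unfolding colon_def
      proof (intro CollectI ballI)
        fix b assume "b \<in> {r. \<forall>j\<in>m. r * j \<in> m}"
        then have "b*a \<in> m" using a by blast
        then have "f*(b*a) \<in> W" using f by (simp add: colon_def)
        thus "a*f*b \<in> W" by (simp add: algebra_simps)
      qed
      thus "a*f \<in> L" using ac unfolding almost_canonical_def L_def by blast
    qed
  next
    assume C
    show "almost_canonical R m W I z" unfolding almost_canonical_def
    proof
      fix g assume g: "g \<in> colon W (colon m m)"
      have "g \<in> colon W (colon W L)" unfolding colon_def
      proof (intro CollectI ballI)
        fix h assume h: "h \<in> {r. \<forall>j\<in>L. r * j \<in> W}"
        have "h \<in> colon m m" unfolding colon_def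
        proof (intro CollectI ballI)
          fix a assume a: "a \<in> m"
          have "h*a \<in> colon W (colon W m)" unfolding colon_def
          proof (intro CollectI ballI)
            fix f assume "f \<in> {r. \<forall>j\<in>m. r * j \<in> W}"
            then have "a*f \<in> L" using \<open>C\<close> a unfolding C_def colon_def by blast
            then have "h*(a*f) \<in> W" using h by blast
            thus "h*a*f \<in> W" by (simp add: mult.assoc)
          qed
          thus "h*a \<in> m" using dual[OF mfr] by simp
        qed
        thus "g*h \<in> W" using g by (simp add: colon_def)
      qed
      thus "g \<in> smul z I" using dual[OF Lfr] unfolding L_def by simp
    qed
  qed
  have E3: "iprod m W \<subseteq> L \<longleftrightarrow> C"
  proof
    assume C
    show "iprod m W \<subseteq> L"
    proof
      fix v assume "v \<in> iprod m W"
      then obtain N a b where 1: "v = (\<Sum>i<(N::nat). a i * b i)" "\<forall>i<N. a i \<in> m \<and> b i \<in> W"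
        by (auto simp: iprod_iff)
      have "\<forall>i<N. b i \<in> colon W m" using 1(2) Wmul mR unfolding colon_def by (auto simp: mult.commute)
      then have "\<forall>i<N. a i * b i \<in> L" using \<open>C\<close> 1(2) unfolding C_def by blast
      thus "v \<in> L" unfolding 1(1) by (intro rmod_sum[OF Lmod]) auto
    qed
  next
    assume H: "iprod m W \<subseteq> L"
    show C unfolding C_def
    proof (intro ballI)
      fix a f assume a: "a \<in> m" and f: "f \<in> colon W m"
      have "a*f \<in> colon W (colon W L)" unfolding colon_def
      proof (intro CollectI ballI)
        fix h assume h: "h \<in> {r. \<forall>j\<in>L. r * j \<in> W}"
        have hR: "h*a' \<in> R" if a': "a' \<in> m" for a'
        proof -
          have "h*a' \<in> colon W W" unfolding colon_def
          proof (intro CollectI ballI)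
            fix k assume "k \<in> W"
            then have "a'*k \<in> L" using H iprod_mem[OF a'] by blast
            then have "h*(a'*k) \<in> W" using h by blast
            thus "h*a'*k \<in> W" by (simp add: mult.assoc)
          qed
          thus ?thesis using WW by simp
        qed
        have hm: "h*a' \<in> m" if a': "a' \<in> m" for a'
        proof (rule ccontr)
          assume nm: "h*a' \<notin> m"
          then obtain u where u: "u \<in> R" "h*a'*u = 1" using hR[OF a'] mdef by blast
          define b where "b = a'*u"
          have bm: "b \<in> m" unfolding b_def using mmul[OF u(1) a'] by (simp add: mult.commute)
          have hb: "h*b = 1" unfolding b_def using u by (simp add: mult.assoc)
          have "h*z \<in> J" unfolding J_def colon_def
          proof (intro CollectI ballI)
            fix i assume "i \<in> I"
            then have "z*i \<in> L" unfolding L_def smul_def by auto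
            then have "h*(z*i) \<in> W" using h by blast
            thus "h*z*i \<in> W" by (simp add: mult.assoc)
          qed
          then have "y*(h*z) \<in> A" unfolding A_def smul_def by auto
          moreover have "y*(h*z) = h*x" using xy(4) by (simp add: algebra_simps)
          ultimately have hx: "h*x \<in> A" by simp
          have ASR: "A \<subseteq> R" using Aid by (simp add: r_ideal_def)
          have "\<forall>k. x^n * h^k \<in> R"
          proof
            fix k
            have "h^k * x^n \<in> ipow R A n" by (rule key_pow[OF sR Aid xi xA red hx])
            thus "x^n * h^k \<in> R" using ipow_sub[OF sR ASR] by (auto simp: mult.commute)
          qed
          moreover have "x^n * xi^n = 1" using xi by (metis power_mult_distrib power_one)
          ultimately have "h \<in> R" using acc[OF noeth sR _ hb] bm mR by blast
          then have "b \<in> R \<and> (\<exists>u\<in>R. b*u = 1)" using bm mR hb by (auto simp: mult.commute)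
          thus False using bm mdef by blast
        qed
        have "f*(h*a) \<in> W" using f hm[OF a] by (simp add: colon_def)
        thus "a*f*h \<in> W" by (simp add: algebra_simps)
      qed
      thus "a*f \<in> L" using dual[OF Lfr] by simp
    qed
  qed
  show ?thesis using E1 E2 E3 unfolding L_def by blast
qed

end
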